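(* Let $\alpha\in(0,1)$, $f=f_{M_1}$, and let $(x_n)$ and $M_0(n)=\frac1n\sum_{j=1}^nM_1(x_j)$ be as in the context. Set $c=e^{\alpha c_1}$ and $w_k=\lfloor c^k\rfloor$. Then there exists $\zeta\in\mathbb R$ such that $$\lim_{k\to\infty}\frac{w_{k+1}}{w_k}=c\qquad\text{and}\qquad\lim_{k\to\infty}M_0(w_k)=\zeta.$$
   Context: $f_{M_1}(x)=x(1+M_1(x)x^\alpha)$ on $[0,1/2]$, $2x-1$ on $(1/2,1]$, with $M_1(x)=C_0\,2^{-\{c_1^{-1}\log x\}}$ ($\{\cdot\}$ fractional part, $\{x\}=\{-x\}$ for $x<0$), $c_1>0$, $C_0$ chosen so $f_{M_1}((1/2)^-)=1$. Discontinuities $s_\ell=e^{-\ell c_1}$ with one-sided limits $f(s_\ell^\pm)$. Sequence: $x_0=1/2$; if $x_n\in[f(s_\ell^-),f(s_\ell^+)]$ for some $\ell$, $x_{n+1}=s_\ell$; otherwise $x_{n+1}\in(0,x_n)$ is the point with $f(x_{n+1})=x_n$. *)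

theory Defs
  imports "HOL-Analysis.Analysis"
begin

text \<open>Fractional part with the paper's convention: for y < 0 it is the
  fractional part of -y.\<close>
definition fracc :: "real \<Rightarrow> real" where
  "fracc y = (if y < 0 then frac (- y) else frac y)"

definition M1 :: "real \<Rightarrow> real \<Rightarrow> real \<Rightarrow> real" where
  "M1 C0 c1 x = C0 * 2 powr (- fracc (ln x / c1))"

text \<open>The map f_{M_1} on [0,1] (outside [0,1] its values are irrelevant).\<close>
definition fM1 :: "real \<Rightarrow> real \<Rightarrow> real \<Rightarrow> real \<Rightarrow> real" where
  "fM1 \<alpha> C0 c1 x = (if x \<le> 1/2 then x * (1 + M1 C0 c1 x * x powr \<alpha>) else 2 * x - 1)"

definition sdisc :: "real \<Rightarrow> nat \<Rightarrow> real" where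
  "sdisc c1 l = exp (- real l * c1)"

definition gapI :: "real \<Rightarrow> real \<Rightarrow> real \<Rightarrow> nat \<Rightarrow> real set" where
  "gapI \<alpha> C0 c1 l =
     (let a = Lim (at_left (sdisc c1 l)) (fM1 \<alpha> C0 c1);
          b = Lim (at_right (sdisc c1 l)) (fM1 \<alpha> C0 c1)
      in {min a b .. max a b})"

definition discidx :: "real \<Rightarrow> nat set" where
  "discidx c1 = {l. 1 \<le> l \<and> sdisc c1 l < 1/2}"

definition is_orbit :: "real \<Rightarrow> real \<Rightarrow> real \<Rightarrow> (nat \<Rightarrow> real) \<Rightarrow> bool" where
  "is_orbit \<alpha> C0 c1 x \<longleftrightarrow>
     x 0 = 1/2 \<and>
     (\<forall>n. (\<forall>l \<in> discidx c1. x n \<in> gapI \<alpha> C0 c1 l \<longrightarrow> x (Suc n) = sdisc c1 l) \<and>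
          ((\<nexists>l. l \<in> discidx c1 \<and> x n \<in> gapI \<alpha> C0 c1 l) \<longrightarrow>
             x (Suc n) \<in> {0<..<x n} \<and> fM1 \<alpha> C0 c1 (x (Suc n)) = x n))"

definition M0 :: "real \<Rightarrow> real \<Rightarrow> (nat \<Rightarrow> real) \<Rightarrow> nat \<Rightarrow> real" where
  "M0 C0 c1 x n = (1 / real n) * (\<Sum>j = 1..n. M1 C0 c1 (x j))"

end

theory Submission
  imports Defs "HOL-Real_Asymp.Real_Asymp"
begin
lemma powr_quot_lim: "((\<lambda>s. ((1+s) powr p - 1)/s) \<longlongrightarrow> p) (at_right (0::real))"
proof -
  have "((\<lambda>s. (1+s) powr (p::real)) has_real_derivative p) (at 0)"
    by (rule derivative_eq_intros refl | simp)+
  hence "((\<lambda>h. ((1 + (0 + h)) powr p - (1 + 0) powr p) / h) \<longlongrightarrow> p) (at 0)"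
    by (simp add: DERIV_def)
  hence "((\<lambda>s. ((1+s) powr p - 1)/s) \<longlongrightarrow> p) (at 0)" by simp
  thus ?thesis by (rule tendsto_mono[OF at_within_le_at])
qed

lemma cesaro_bad:
  fixes d :: "nat \<Rightarrow> real" and bad :: "nat \<Rightarrow> bool"
  assumes B: "\<And>n. n \<ge> Nb \<Longrightarrow> bad n \<Longrightarrow> \<bar>d n\<bar> \<le> B"
    and G: "\<And>e. e > 0 \<Longrightarrow> \<exists>N. \<forall>n\<ge>N. \<not> bad n \<longrightarrow> \<bar>d n\<bar> \<le> e"
    and cnt: "(\<lambda>n. (\<Sum>j<n. if bad j then 1 else 0) / real n) \<longlonglongrightarrow> 0"
  shows "(\<lambda>n. (\<Sum>j<n. d j) / real n) \<longlonglongrightarrow> 0"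
proof (rule LIMSEQ_I)
  fix r :: real assume r: "0 < r"
  define B1 where "B1 = \<bar>B\<bar> + 1"
  have B1p: "0 < B1" by (simp add: B1_def)
  obtain N1 where N1: "\<And>n. n \<ge> N1 \<Longrightarrow> \<not> bad n \<Longrightarrow> \<bar>d n\<bar> \<le> r/3" using G[of "r/3"] r by auto
  define N where "N = max Nb N1"
  define S where "S = (\<Sum>j<N. \<bar>d j\<bar>)"
  have S0: "0 \<le> S" by (simp add: S_def sum_nonneg)
  have hj: "\<bar>d j\<bar> \<le> r/3 + B1 * (if bad j then 1 else 0)" if "N \<le> j" for j
    using B[of j] N1[of j] that r by (cases "bad j") (auto simp: N_def B1_def)
  obtain N2 where N2: "\<And>n. n \<ge> N2 \<Longrightarrow> \<bar>(\<Sum>j<n. if bad j then 1 else 0) / real n - 0\<bar> < r / (3 * B1)"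
    using LIMSEQ_D[OF cnt, of "r/(3*B1)"] r B1p by auto
  obtain N3 :: nat where N3: "3 * S / r < real N3" using reals_Archimedean2 by blast
  show "\<exists>M. \<forall>n\<ge>M. norm ((\<Sum>j<n. d j) / real n - 0) < r"
  proof (intro exI allI impI)
    fix n assume n: "max N (max N2 (Suc N3)) \<le> n"
    have npos: "0 < real n" using n by auto
    define cn where "cn = (\<Sum>j<n. if bad j then 1 else (0::real))"
    have "\<bar>\<Sum>j<n. d j\<bar> \<le> (\<Sum>j<n. \<bar>d j\<bar>)" by (rule sum_abs)
    also have "\<dots> \<le> (\<Sum>j<n. (if j \<in> {..<N} then \<bar>d j\<bar> else 0) + (r/3 + B1 * (if bad j then 1 else 0)))"
    proof (rule sum_mono)
      fix j assume "j \<in> {..<n}"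
      show "\<bar>d j\<bar> \<le> (if j \<in> {..<N} then \<bar>d j\<bar> else 0) + (r/3 + B1 * (if bad j then 1 else 0))"
        using hj[of j] r B1p by (cases "j < N") auto
    qed
    also have "\<dots> = (\<Sum>j<n. if j \<in> {..<N} then \<bar>d j\<bar> else 0) + real n * (r/3) + B1 * cn"
      by (simp add: sum.distrib sum_distrib_left cn_def)
    also have "(\<Sum>j<n. if j \<in> {..<N} then \<bar>d j\<bar> else 0) = S"
    proof -
      have "{..<n} \<inter> {..<N} = {..<N}" using n by auto
      thus ?thesis using sum.inter_restrict[of "{..<n}" "\<lambda>j. \<bar>d j\<bar>" "{..<N}"]
        by (simp add: S_def del: lessThan_iff)
    qed
    finally have tot: "\<bar>\<Sum>j<n. d j\<bar> \<le> S + real n * (r/3) + B1 * cn" .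
    have cn0: "0 \<le> cn" by (simp add: cn_def sum_nonneg)
    have c1: "cn / real n < r / (3 * B1)" using N2[of n] n cn0 by (auto simp: cn_def)
    have "B1 * cn < real n * (r/3)"
      using c1 npos B1p by (simp add: field_simps)
    moreover have "S < real n * (r/3)"
    proof -
      have "real N3 < real n" using n by auto
      hence "3 * S / r < real n" using N3 by linarith
      thus ?thesis using r by (simp add: field_simps)
    qed
    ultimately have "\<bar>\<Sum>j<n. d j\<bar> < real n * r" using tot by linarith
    thus "norm ((\<Sum>j<n. d j) / real n - 0) < r" using npos by (simp add: field_simps)
  qed
qed
lemma frac_by_bounds: "real_of_int k \<le> t \<Longrightarrow> t < real_of_int k + 1 \<Longrightarrow> frac t = t - real_of_int k"
proof -
  assume "real_of_int k \<le> t" "t < real_of_int k + 1"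
  hence "\<lfloor>t\<rfloor> = k" by (simp add: floor_eq_iff)
  thus ?thesis by (simp add: frac_def)
qed

locale orb =
  fixes a C c1 :: real and x :: "nat \<Rightarrow> real"
  assumes a_pos: "0 < a" and c1_pos: "0 < c1" and C_pos: "0 < C"
    and orbit: "is_orbit a C c1 x"
begin

definition "tau y = - ln y / c1"
definition "g (j::real) y = y * (1 + C * 2 powr (- (tau y - j)) * y powr a)"

lemma M1_eq: "0 < y \<Longrightarrow> y < 1 \<Longrightarrow> M1 C c1 y = C * 2 powr (- frac (tau y))"
proof -
  assume y: "0 < y" "y < 1"
  have "ln y < 0" using y by simp
  hence "ln y / c1 < 0" using c1_pos by (simp add: divide_neg_pos)
  thus ?thesis by (simp add: M1_def fracc_def tau_def)
qed

lemma M1_bounds: "0 < y \<Longrightarrow> y < 1 \<Longrightarrow> C/2 \<le> M1 C c1 y \<and> M1 C c1 y \<le> C"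
proof -
  assume y: "0 < y" "y < 1"
  have f: "0 \<le> frac (tau y)" "frac (tau y) < 1" by (auto simp: frac_lt_1)
  have "2 powr (- frac (tau y)) \<le> 2 powr 0" using f by (intro powr_mono) auto
  moreover have "2 powr (-1) \<le> 2 powr (- frac (tau y))" using f by (intro powr_mono) auto
  ultimately have "1/2 \<le> 2 powr (- frac (tau y))" "2 powr (- frac (tau y)) \<le> 1"
    by (auto simp: powr_minus_divide)
  thus ?thesis using M1_eq[OF y] C_pos by (auto simp: mult_left_mono)
qed

lemma tau_sdisc: "tau (sdisc c1 l) = real l"
  using c1_pos by (simp add: tau_def sdisc_def)

lemma sdisc_pos: "0 < sdisc c1 l" by (simp add: sdisc_def)

lemma tau_less_iff: "0 < y \<Longrightarrow> 0 < z \<Longrightarrow> tau y < tau z \<longleftrightarrow> z < y"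
  using c1_pos by (simp add: tau_def divide_less_cancel)

lemma tau_gt_l: "0 < y \<Longrightarrow> real l < tau y \<longleftrightarrow> y < sdisc c1 l"
  using tau_less_iff[of "sdisc c1 l" y] tau_sdisc sdisc_pos by auto

lemma tau_lt_l: "0 < y \<Longrightarrow> tau y < real l \<longleftrightarrow> sdisc c1 l < y"
  using tau_less_iff[of y "sdisc c1 l"] tau_sdisc sdisc_pos by auto

lemma g_cont: "0 < s \<Longrightarrow> isCont (g j) s"
  unfolding g_def tau_def using c1_pos by (intro continuous_intros) auto

lemma gapI_eq:
  assumes l: "l \<in> discidx c1"
  defines "s \<equiv> sdisc c1 l"
  shows "gapI a C c1 l = {s * (1 + C/2 * s powr a) .. s * (1 + C * s powr a)}"
proof -
  have l1: "1 \<le> l" and sh: "s < 1/2" using l by (auto simp: discidx_def s_def)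
  have sp: "0 < s" by (simp add: s_def sdisc_pos)
  have ts: "tau s = real l" by (simp add: s_def tau_sdisc)
  have lim1: "(fM1 a C c1 \<longlongrightarrow> s * (1 + C * s powr a)) (at_left s)"
  proof -
    have "(g (real l) \<longlongrightarrow> g (real l) s) (at_left s)"
      using g_cont[OF sp] by (simp add: isCont_def filterlim_at_split)
    moreover have "g (real l) s = s * (1 + C * s powr a)" by (simp add: g_def ts)
    moreover have "eventually (\<lambda>y. g (real l) y = fM1 a C c1 y) (at_left s)"
    proof -
      have "sdisc c1 (Suc l) < s" using c1_pos by (simp add: s_def sdisc_def algebra_simps)
      from eventually_at_left_real[OF this] show ?thesis
      proof (rule eventually_mono)
        fix y assume y: "y \<in> {sdisc c1 (Suc l)<..<s}"
        have yp: "0 < y" using y sdisc_pos[of "Suc l"] by auto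
        have y1: "y < 1" using y sh by auto
        have "real l < tau y" "tau y < real l + 1"
          using y tau_gt_l[OF yp, of l] tau_lt_l[OF yp, of "Suc l"] by (auto simp: s_def)
        hence "frac (tau y) = tau y - real l"
          using frac_by_bounds[of "int l" "tau y"] by simp
        thus "g (real l) y = fM1 a C c1 y" using y sh M1_eq[OF yp y1]
          by (simp add: g_def fM1_def)
      qed
    qed
    ultimately show ?thesis by (simp add: tendsto_cong)
  qed
  have lim2: "(fM1 a C c1 \<longlongrightarrow> s * (1 + C/2 * s powr a)) (at_right s)"
  proof -
    have "(g (real l - 1) \<longlongrightarrow> g (real l - 1) s) (at_right s)"
      using g_cont[OF sp] by (simp add: isCont_def filterlim_at_split)
    moreover have "g (real l - 1) s = s * (1 + C/2 * s powr a)" by (simp add: g_def ts powr_minus_divide)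
    moreover have "eventually (\<lambda>y. g (real l - 1) y = fM1 a C c1 y) (at_right s)"
    proof -
      have "s < min (1/2) (sdisc c1 (l - 1))" using c1_pos sh l1 by (simp add: s_def sdisc_def of_nat_diff algebra_simps)
      from eventually_at_right_real[OF this] show ?thesis
      proof (rule eventually_mono)
        fix y assume y: "y \<in> {s<..<min (1/2) (sdisc c1 (l - 1))}"
        have yp: "0 < y" using y sp by auto
        have y1: "y < 1" using y by auto
        have "real (l - 1) < tau y" "tau y < real l"
          using y tau_gt_l[OF yp, of "l - 1"] tau_lt_l[OF yp, of l] by (auto simp: s_def)
        hence "frac (tau y) = tau y - (real l - 1)" using l1
          using frac_by_bounds[of "int l - 1" "tau y"] by (simp add: of_nat_diff)
        thus "g (real l - 1) y = fM1 a C c1 y" using y M1_eq[OF yp y1]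
          by (simp add: g_def fM1_def)
      qed
    qed
    ultimately show ?thesis by (simp add: tendsto_cong)
  qed
  have "s * (1 + C/2 * s powr a) \<le> s * (1 + C * s powr a)"
    using sp C_pos by (intro mult_left_mono) auto
  thus ?thesis unfolding gapI_def Let_def
    using tendsto_Lim[OF _ lim1] tendsto_Lim[OF _ lim2] by (simp add: s_def)
qed


definition "gap n \<longleftrightarrow> (\<exists>l\<in>discidx c1. x n \<in> gapI a C c1 l)"

lemma step:
  assumes xp: "0 < x n" and xh: "x n \<le> 1/2"
  shows "0 < x (Suc n) \<and> x (Suc n) < x n \<and> x n \<le> x (Suc n) * (1 + C * x (Suc n) powr a)
        \<and> x (Suc n) * (1 + C/2 * x (Suc n) powr a) \<le> x n
        \<and> (\<not> gap n \<longrightarrow> x n = x (Suc n) * (1 + M1 C c1 (x (Suc n)) * x (Suc n) powr a))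
        \<and> (gap n \<longrightarrow> (\<exists>l. x (Suc n) = sdisc c1 l))"
proof (cases "gap n")
  case True
  then obtain l where l: "l \<in> discidx c1" "x n \<in> gapI a C c1 l" by (auto simp: gap_def)
  have xs: "x (Suc n) = sdisc c1 l" using orbit l by (auto simp: is_orbit_def)
  define s where "s = sdisc c1 l"
  have sp: "0 < s" by (simp add: s_def sdisc_pos)
  have b: "s * (1 + C/2 * s powr a) \<le> x n" "x n \<le> s * (1 + C * s powr a)"
    using l gapI_eq[OF l(1)] by (auto simp: s_def)
  have "s < s * (1 + C/2 * s powr a)" using sp C_pos by simp
  hence "s < x n" using b(1) by linarith
  thus ?thesis using True b xs sp by (auto simp: s_def)
next
  case False
  hence "\<nexists>l. l \<in> discidx c1 \<and> x n \<in> gapI a C c1 l" by (auto simp: gap_def)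
  hence o: "x (Suc n) \<in> {0<..<x n}" "fM1 a C c1 (x (Suc n)) = x n"
    using orbit by (auto simp: is_orbit_def)
  define y where "y = x (Suc n)"
  have y: "0 < y" "y < 1/2" using o xh by (auto simp: y_def)
  have eq: "x n = y * (1 + M1 C c1 y * y powr a)" using o y by (simp add: fM1_def y_def)
  have mb: "C/2 \<le> M1 C c1 y" "M1 C c1 y \<le> C" using M1_bounds[of y] y by auto
  have yp: "0 < y powr a" using y by simp
  have "y * (1 + M1 C c1 y * y powr a) \<le> y * (1 + C * y powr a)"
    using mb yp y by (intro mult_left_mono) auto
  moreover have "y * (1 + C/2 * y powr a) \<le> y * (1 + M1 C c1 y * y powr a)"
    using mb yp y by (intro mult_left_mono) auto
  ultimately show ?thesis using False eq o by (auto simp: y_def)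
qed

lemma x_bounds: "0 < x n \<and> x n \<le> 1/2"
proof (induction n)
  case 0 thus ?case using orbit by (simp add: is_orbit_def)
next
  case (Suc n) thus ?case using step[of n] by auto
qed

lemma x_pos: "0 < x n" and x_half: "x n \<le> 1/2" and x_lt1: "x n < 1"
  using x_bounds[of n] by auto

lemma x_dec: "x (Suc n) < x n"
  and x_up: "x n \<le> x (Suc n) * (1 + C * x (Suc n) powr a)"
  and x_low: "x (Suc n) * (1 + C/2 * x (Suc n) powr a) \<le> x n"
  and x_ng: "\<not> gap n \<Longrightarrow> x n = x (Suc n) * (1 + M1 C c1 (x (Suc n)) * x (Suc n) powr a)"
  and x_g: "gap n \<Longrightarrow> \<exists>l. x (Suc n) = sdisc c1 l"
  using step[OF x_pos x_half, of n] by auto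

lemma x_decseq: "decseq x"
  using x_dec by (intro decseq_SucI) (simp add: less_imp_le)

lemma x_lim: "x \<longlonglongrightarrow> 0"
proof -
  have small: "\<exists>n. x n < d" if d: "0 < d" for d
  proof (rule ccontr)
    assume "\<not> ?thesis"
    hence ge: "\<And>n. d \<le> x n" by (auto simp: not_less)
    define eta where "eta = d * (C/2 * d powr a)"
    have etap: "0 < eta" using d C_pos by (simp add: eta_def)
    have "x n \<le> 1/2 - real n * eta" for n
    proof (induction n)
      case 0 thus ?case using x_half[of 0] by simp
    next
      case (Suc n)
      have "d powr a \<le> x (Suc n) powr a" using ge[of "Suc n"] d a_pos by (intro powr_mono2) auto
      hence "eta \<le> x (Suc n) * (C/2 * x (Suc n) powr a)" unfolding eta_def
        using ge[of "Suc n"] d C_pos by (intro mult_mono) auto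
      thus ?case using x_low[of n] Suc by (simp add: algebra_simps)
    qed
    moreover obtain n where "1/2 < real n * eta"
      using reals_Archimedean3[OF etap] by blast
    ultimately show False using x_pos[of n] by (smt (verit))
  qed
  show ?thesis
  proof (rule LIMSEQ_I)
    fix r :: real assume r: "0 < r"
    obtain N where N: "x N < r" using small[OF r] by blast
    have "norm (x n - 0) < r" if "N \<le> n" for n
      using decseqD[OF x_decseq that] N x_pos[of n] by simp
    thus "\<exists>N. \<forall>n\<ge>N. norm (x n - 0) < r" by blast
  qed
qed


definition "c = exp (a * c1)"
definition "kap = ln (2 * c) / c1"
definition "kk t = c powr real_of_int \<lfloor>t\<rfloor> * ((2 * c) powr frac t + c / (c - 1))"

lemma c_gt1: "1 < c" using a_pos c1_pos by (simp add: c_def)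
lemma ln_c: "ln c = a * c1" by (simp add: c_def)
lemma kap_pos: "0 < kap" using c_gt1 c1_pos by (simp add: kap_def)

lemma c_powr_tau: "0 < y \<Longrightarrow> c powr (tau y) = y powr (- a)"
  using c1_pos by (simp add: powr_def ln_c tau_def c_def)

lemma twoc_powr: "0 < y \<Longrightarrow> 0 < z \<Longrightarrow> (2*c) powr (ln (z / y) / c1) = (z / y) powr kap"
  using c1_pos c_gt1 by (simp add: powr_def kap_def)

lemma kk_pos: "0 < kk t"
  using c_gt1 by (simp add: kk_def add_pos_pos)

lemma kk_shift: "kk (t + real k) = c ^ k * kk t"
proof -
  have fl: "\<lfloor>t + real k\<rfloor> = \<lfloor>t\<rfloor> + int k" by linarith
  have fr: "frac (t + real k) = frac t" by (simp add: frac_def fl)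
  have "c powr real_of_int (\<lfloor>t\<rfloor> + int k) = c powr real_of_int \<lfloor>t\<rfloor> * c ^ k"
    using c_gt1 by (simp add: powr_add powr_realpow)
  thus ?thesis by (simp add: kk_def fl fr)
qed

lemma kk_strict_mono: assumes "t < t'" shows "kk t < kk t'"
proof (cases "\<lfloor>t\<rfloor> = \<lfloor>t'\<rfloor>")
  case True
  hence "frac t < frac t'" using assms by (simp add: frac_def)
  hence "(2*c) powr frac t < (2*c) powr frac t'" using c_gt1 by (intro powr_less_mono) auto
  thus ?thesis using True c_gt1 by (simp add: kk_def)
next
  case False
  hence lt: "\<lfloor>t\<rfloor> + 1 \<le> \<lfloor>t'\<rfloor>" using floor_mono[of t t'] assms by linarith
  have "(2*c) powr frac t < (2*c) powr 1" using c_gt1 frac_lt_1[of t] by (intro powr_less_mono) auto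
  hence "kk t < c powr real_of_int \<lfloor>t\<rfloor> * (2*c + c/(c-1))" using c_gt1 by (simp add: kk_def)
  also have "\<dots> = c powr (real_of_int \<lfloor>t\<rfloor> + 1) * (1 + c/(c-1))"
    using c_gt1 by (simp add: powr_add field_simps)
  also have "\<dots> \<le> c powr real_of_int \<lfloor>t'\<rfloor> * (1 + c/(c-1))"
    using c_gt1 lt by (intro mult_right_mono powr_mono) auto
  also have "\<dots> \<le> kk t'"
  proof -
    have "1 \<le> (2*c) powr frac t'" using c_gt1 by (intro ge_one_powr_ge_zero) auto
    thus ?thesis using c_gt1 by (simp add: kk_def)
  qed
  finally show ?thesis .
qed

lemma kk_mono: "t \<le> t' \<Longrightarrow> kk t \<le> kk t'"
  using kk_strict_mono[of t t'] by (cases "t = t'") auto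

lemma good_incr:
  assumes y: "0 < y" "y < 1" and th: "th = M1 C c1 y * y powr a" and z: "z = y * (1 + th)"
    and fl: "\<lfloor>tau z\<rfloor> = \<lfloor>tau y\<rfloor>"
  shows "kk (tau y) - kk (tau z) = C * (1 - (1 + th) powr (- kap)) / th"
    and "y powr (- a) - z powr (- a) = M1 C c1 y * (1 - (1 + th) powr (- a)) / th"
proof -
  have mb: "C/2 \<le> M1 C c1 y" using M1_bounds[OF y] by auto
  have thp: "0 < th" using th mb C_pos y by simp
  have zp: "0 < z" using z thp y by simp
  define l where "l = real_of_int \<lfloor>tau y\<rfloor>"
  define f where "f = tau y - l"
  have fy: "frac (tau y) = f" by (simp add: f_def l_def frac_def)
  have tz: "tau z = tau y - ln (1 + th) / c1"
    using y thp by (simp add: z tau_def ln_mult diff_divide_distrib)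
  have "frac (tau z) = tau z - l" using fl by (simp add: frac_def l_def)
  hence fz: "frac (tau z) = f - ln (1 + th) / c1" by (simp add: tz f_def)
  have P: "(2*c) powr (f - ln (1 + th) / c1) = (2*c) powr f * (1 + th) powr (- kap)"
  proof -
    have "(2*c) powr (ln (1 + th) / c1) = (1 + th) powr kap"
      using twoc_powr[of 1 "1 + th"] thp by simp
    thus ?thesis using c_gt1 by (simp add: powr_diff powr_minus divide_inverse)
  qed
  have M: "M1 C c1 y = C * 2 powr (- f)" using M1_eq[OF y] fy by simp
  have Q: "c powr l * (2*c) powr f * th = C"
  proof -
    have "c powr l * (2*c) powr f * th = C * (2 powr f * 2 powr (-f)) * ((c powr l * c powr f) * y powr a)"
      using c_gt1 by (simp add: th M powr_mult)
    also have "c powr l * c powr f = y powr (- a)"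
      using c_powr_tau[OF y(1)] by (simp add: powr_add[symmetric] f_def)
    also have "2 powr f * 2 powr (-f) = (1::real)" by (simp add: powr_add[symmetric])
    finally show ?thesis using y by (simp add: powr_add[symmetric])
  qed
  have "kk (tau y) - kk (tau z) = c powr l * ((2*c) powr f - (2*c) powr (f - ln (1 + th) / c1))"
    by (simp add: kk_def fl fy fz l_def algebra_simps)
  also have "\<dots> = (c powr l * (2*c) powr f * th) * (1 - (1 + th) powr (- kap)) / th"
    using thp by (simp add: P field_simps)
  finally show "kk (tau y) - kk (tau z) = C * (1 - (1 + th) powr (- kap)) / th" by (simp add: Q)
  have "z powr (- a) = y powr (- a) * (1 + th) powr (- a)"
    using y thp by (simp add: z powr_mult)
  moreover have "y powr (- a) * th = M1 C c1 y"
    using y by (simp add: th powr_minus field_simps)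
  ultimately show "y powr (- a) - z powr (- a) = M1 C c1 y * (1 - (1 + th) powr (- a)) / th"
    using thp by (simp add: field_simps)
qed


lemma bad_incr:
  assumes y: "0 < y" "y < z" and z: "z \<le> y * (1 + s)" and s: "0 \<le> s" "s < c1"
    and fl: "\<lfloor>tau z\<rfloor> \<noteq> \<lfloor>tau y\<rfloor>"
  shows "0 \<le> kk (tau y) - kk (tau z) \<and> kk (tau y) - kk (tau z) \<le> 3 * y powr (- a) * ((1 + s) powr kap - 1)"
proof -
  define t' where "t' = tau y"
  define t where "t = tau z"
  have zp: "0 < z" using y by simp
  have tt: "t < t'" using tau_less_iff[OF zp y(1)] y by (simp add: t_def t'_def)
  have diff: "t' - t = ln (z / y) / c1"
    using y zp by (simp add: t_def t'_def tau_def ln_div diff_divide_distrib)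
  have zy: "z / y \<le> 1 + s" using z y by (simp add: divide_le_eq mult.commute)
  have "ln (z / y) \<le> ln (1 + s)" using zy y zp by (intro ln_mono) auto
  also have "\<dots> \<le> s" using s by (simp add: ln_add_one_self_le_self)
  finally have "ln (z / y) < c1" using s by simp
  hence d1: "t' - t < 1" using diff c1_pos by simp
  define l where "l = \<lfloor>t'\<rfloor>"
  have "\<lfloor>t\<rfloor> \<le> l" using floor_mono[of t t'] tt by (simp add: l_def)
  hence fl1: "\<lfloor>t\<rfloor> < l" using fl by (simp add: l_def t_def t'_def)
  have "l - 1 \<le> t" using d1 of_int_floor_le[of t'] unfolding l_def by linarith
  hence fl2: "\<lfloor>t\<rfloor> = l - 1" using fl1 by (simp add: le_floor_iff[symmetric]) linarith
  have ft: "frac t = t - (l - 1)" by (simp add: frac_def fl2)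
  have ft': "frac t' = t' - l" by (simp add: frac_def l_def)
  define P where "P = (2*c) powr (t' - l)"
  define Q where "Q = (2*c) powr (t - l)"
  define R where "R = (2*c) powr (t' - t)"
  have c2: "1 < 2 * c" using c_gt1 by simp
  have Pg: "1 \<le> P" unfolding P_def using c2 of_int_floor_le[of t'] by (intro ge_one_powr_ge_zero) (auto simp: l_def)
  have PR: "P \<le> R" unfolding P_def R_def using c2 fl1 by (intro powr_mono) (auto simp: le_floor_iff floor_less_iff)
  have tl: "t < l" using fl1 by (simp add: floor_less_iff)
  have QR: "(2*c) powr (t - t') \<le> Q" unfolding Q_def using c2 tt by (intro powr_mono) (auto simp: l_def)
  have "Q \<le> (2*c) powr 0" unfolding Q_def using c2 tl by (intro powr_mono) auto
  hence Qle: "Q \<le> 1" using c2 by simp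
  have Rinv: "(2*c) powr (t - t') = 1 / R" unfolding R_def using c2 by (simp add: powr_minus_divide[symmetric])
  have R1: "1 \<le> R" using Pg PR by simp
  have kd: "kk t' - kk t = c powr l * (P + 1 - 2 * Q)"
  proof -
    have "(2*c) powr frac t = (2*c) powr (1 + (t - l))" unfolding ft by (simp add: algebra_simps)
    also have "\<dots> = (2*c) * Q" unfolding Q_def using c2 by (simp add: powr_add)
    finally have "(2*c) powr frac t = (2*c) * Q" .
    moreover have "c powr real_of_int \<lfloor>t\<rfloor> = c powr l / c" using c_gt1
      by (simp add: fl2 powr_diff)
    ultimately have e1: "kk t = (c powr l / c) * ((2*c) * Q + c/(c-1))" by (simp add: kk_def)
    have e2: "kk t' = c powr l * (P + c/(c-1))" by (simp add: kk_def ft' P_def l_def)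
    have gen: "cl * (P + c/(c-1)) - (cl / c) * ((2*c) * Q + c/(c-1)) = cl * (P + 1 - 2 * Q)"
      for cl :: real
    proof -
      have h1: "(cl/c)*((2*c)*Q + c/(c-1)) = 2*cl*Q + cl/(c-1)" using c_gt1 by (simp add: field_simps)
      have h2: "cl*(P + c/(c-1)) = cl*P + cl + cl/(c-1)" using c_gt1 by (simp add: field_simps)
      show ?thesis unfolding h1 h2 by (simp add: algebra_simps)
    qed
    show ?thesis using gen[of "c powr l"] e1 e2 by simp
  qed
  have clp: "0 < c powr l" using c_gt1 by simp
  have b1: "0 \<le> P + 1 - 2 * Q" using Pg Qle by simp
  have b2: "P + 1 - 2 * Q \<le> 3 * (R - 1)"
  proof -
    have "P + 1 - 2 * Q \<le> R + 1 - 2 / R" using PR QR Rinv by simp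
    moreover have "R + 1 - 2 / R \<le> 3 * (R - 1)"
    proof -
      have "0 \<le> 2 * (R - 1)^2 / R" using R1 by simp
      moreover have "2 * (R - 1)^2 / R = 3 * (R - 1) - (R + 1 - 2 / R)"
        using R1 by (simp add: field_simps power2_eq_square)
      ultimately show ?thesis by simp
    qed
    ultimately show ?thesis by simp
  qed
  have cl: "c powr l \<le> y powr (- a)"
  proof -
    have "c powr l \<le> c powr t'" using c_gt1 of_int_floor_le[of t'] by (intro powr_mono) (auto simp: l_def)
    thus ?thesis using c_powr_tau[OF y(1)] by (simp add: t'_def)
  qed
  have Rb: "R \<le> (1 + s) powr kap"
  proof -
    have "R = (z / y) powr kap" unfolding R_def diff using twoc_powr[OF y(1) zp] .
    also have "\<dots> \<le> (1 + s) powr kap" using zy y zp kap_pos by (intro powr_mono2) auto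
    finally show ?thesis .
  qed
  have "kk t' - kk t \<le> c powr l * (3 * (R - 1))" using kd b2 clp by (simp add: mult_left_mono)
  also have "\<dots> \<le> y powr (- a) * (3 * ((1 + s) powr kap - 1))"
    using cl Rb R1 clp by (intro mult_mono) auto
  also have "\<dots> = 3 * y powr (- a) * ((1 + s) powr kap - 1)" by simp
  finally show ?thesis using kd b1 clp by (simp add: t_def t'_def)
qed


definition "u n = x n powr (- a)"
definition "tt n = tau (x n)"
definition "T n = kk (tt n)"
definition "bad n \<longleftrightarrow> \<lfloor>tt (Suc n)\<rfloor> \<noteq> \<lfloor>tt n\<rfloor>"
definition "th n = M1 C c1 (x (Suc n)) * x (Suc n) powr a"
definition "e n = T (Suc n) - T n - kap * C"
definition "d n = u (Suc n) - u n - a * M1 C c1 (x (Suc n))"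

lemma xs_small: "0 < r \<Longrightarrow> \<exists>N. \<forall>n\<ge>N. C * x (Suc n) powr a < r"
proof -
  assume r: "0 < r"
  have "(\<lambda>n. x (Suc n)) \<longlonglongrightarrow> 0" using x_lim by (rule LIMSEQ_Suc)
  hence "(\<lambda>n. x (Suc n) powr a) \<longlonglongrightarrow> 0"
    using a_pos x_pos by (intro tendsto_zero_powrI) (auto intro!: always_eventually less_imp_le)
  hence "(\<lambda>n. C * x (Suc n) powr a) \<longlonglongrightarrow> C * 0" by (intro tendsto_intros)
  from LIMSEQ_D[OF this[simplified] r] obtain N where "\<forall>n\<ge>N. norm (C * x (Suc n) powr a) < r" by auto
  thus ?thesis by (metis real_norm_def abs_less_iff)
qed

lemma lim_delta:
  fixes f :: "real \<Rightarrow> real"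
  assumes "(f \<longlongrightarrow> L) (at_right (0::real))" "0 < r"
  shows "\<exists>\<delta>>0. \<forall>s. 0 < s \<and> s < \<delta> \<longrightarrow> \<bar>f s - L\<bar> < r"
proof -
  have "eventually (\<lambda>s. dist (f s) L < r) (at_right 0)" using assms tendsto_iff by blast
  then obtain b where "b > 0" "\<forall>s>0. s < b \<longrightarrow> dist (f s) L < r"
    by (auto simp: eventually_at_right[of 0 1])
  thus ?thesis by (auto simp: dist_real_def)
qed

lemma tt_mono: "tt n < tt (Suc n)"
  using tau_less_iff[OF x_pos x_pos] x_dec by (simp add: tt_def)

lemma good_not_gap: "\<not> bad n \<Longrightarrow> \<not> gap n"
proof
  assume g: "gap n" and nb: "\<not> bad n"
  obtain l where l: "x (Suc n) = sdisc c1 l" using x_g[OF g] by blast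
  have "tt (Suc n) = real l" by (simp add: tt_def l tau_sdisc)
  moreover have "tt n < real l" using tau_lt_l[OF x_pos, of n l] x_dec[of n] l by (simp add: tt_def)
  ultimately show False using nb by (simp add: bad_def floor_less_iff) linarith
qed

lemma good_facts:
  assumes nb: "\<not> bad n"
  shows "0 < th n" "th n \<le> C * x (Suc n) powr a"
    "e n = - C * (((1 + th n) powr (- kap) - 1) / th n - (- kap))"
    "\<bar>d n\<bar> \<le> C * \<bar>((1 + th n) powr (- a) - 1) / th n - (- a)\<bar>"
proof -
  define y where "y = x (Suc n)"
  have y: "0 < y" "y < 1" using x_pos x_lt1 by (auto simp: y_def)
  have mb: "C/2 \<le> M1 C c1 y" "M1 C c1 y \<le> C" using M1_bounds[OF y] by auto
  have ya: "0 < y powr a" using y by simp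
  show thp: "0 < th n" using mb C_pos ya by (simp add: th_def y_def[symmetric])
  show "th n \<le> C * x (Suc n) powr a" using mb ya by (simp add: th_def y_def[symmetric] mult_right_mono)
  have z: "x n = y * (1 + th n)" using x_ng[OF good_not_gap[OF nb]] by (simp add: th_def y_def)
  have fl: "\<lfloor>tau (x n)\<rfloor> = \<lfloor>tau y\<rfloor>" using nb by (simp add: bad_def tt_def y_def)
  note gi = good_incr[OF y th_def[of n, folded y_def] z fl]
  show "e n = - C * (((1 + th n) powr (- kap) - 1) / th n - (- kap))"
    using gi(1) thp by (simp add: e_def T_def tt_def y_def[symmetric] field_simps)
  have "d n = M1 C c1 y * (- (((1 + th n) powr (- a) - 1) / th n - (- a)))"
    using gi(2) thp by (simp add: d_def u_def y_def[symmetric] field_simps)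
  hence "\<bar>d n\<bar> = M1 C c1 y * \<bar>((1 + th n) powr (- a) - 1) / th n - (- a)\<bar>"
    using mb C_pos by (simp add: abs_mult)
  thus "\<bar>d n\<bar> \<le> C * \<bar>((1 + th n) powr (- a) - 1) / th n - (- a)\<bar>"
    using mb by (simp add: mult_right_mono)
qed

lemma du_bounds: "0 \<le> u (Suc n) - u n \<and> u (Suc n) - u n \<le> a * C"
proof -
  define y where "y = x (Suc n)"
  define s where "s = C * y powr a"
  have y: "0 < y" using x_pos by (simp add: y_def)
  have s0: "0 \<le> s" using C_pos by (simp add: s_def)
  have z1: "y < x n" "x n \<le> y * (1 + s)" using x_dec x_up by (auto simp: y_def s_def)
  have "x n powr (- a) \<le> y powr (- a)" using z1 y a_pos by (intro powr_mono2') auto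
  hence g0: "0 \<le> u (Suc n) - u n" by (simp add: u_def y_def)
  have "(y * (1 + s)) powr (- a) \<le> x n powr (- a)" using z1 y a_pos s0 by (intro powr_mono2') auto
  hence "y powr (- a) * (1 + s) powr (- a) \<le> x n powr (- a)" using y s0 by (simp add: powr_mult)
  moreover have "1 - a * s \<le> (1 + s) powr (- a)"
  proof -
    have e1: "(1 + s) powr (- a) = exp (- a * ln (1 + s))" using s0 by (simp add: powr_def)
    have "1 + (- a * ln (1 + s)) \<le> exp (- a * ln (1 + s))" by (rule exp_ge_add_one_self)
    moreover have "ln (1 + s) \<le> s" using s0 by (simp add: ln_add_one_self_le_self)
    hence "a * ln (1 + s) \<le> a * s" using a_pos by simp
    ultimately show ?thesis unfolding e1 by linarith
  qed
  ultimately have "y powr (- a) * (1 - a * s) \<le> x n powr (- a)"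
  proof -
    assume h1: "y powr (- a) * (1 + s) powr (- a) \<le> x n powr (- a)" and h2: "1 - a * s \<le> (1 + s) powr (- a)"
    have "y powr (- a) * (1 - a * s) \<le> y powr (- a) * (1 + s) powr (- a)"
      using h2 by (intro mult_left_mono) auto
    thus ?thesis using h1 by linarith
  qed
  moreover have "y powr (- a) * s = C" using y by (simp add: s_def powr_minus field_simps)
  ultimately have "u (Suc n) - u n \<le> a * C" by (simp add: u_def y_def[symmetric] algebra_simps)
  thus ?thesis using g0 by simp
qed

lemma d_bound: "\<bar>d n\<bar> \<le> a * C"
proof -
  define M where "M = M1 C c1 (x (Suc n))"
  have "C/2 \<le> M" "M \<le> C" using M1_bounds[OF x_pos x_lt1] by (auto simp: M_def)
  hence "a * (C/2) \<le> a * M" "a * M \<le> a * C" using a_pos by (auto intro: mult_left_mono)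
  moreover have "0 \<le> a * (C/2)" using a_pos C_pos by simp
  ultimately show ?thesis using du_bounds[of n] unfolding d_def M_def[symmetric] by linarith
qed


lemma G_e: "0 < r \<Longrightarrow> \<exists>N. \<forall>n\<ge>N. \<not> bad n \<longrightarrow> \<bar>e n\<bar> \<le> r"
proof -
  assume r: "0 < r"
  obtain \<delta> where dp: "\<delta> > 0" and dl: "\<And>s. 0 < s \<Longrightarrow> s < \<delta> \<Longrightarrow> \<bar>((1+s) powr (- kap) - 1)/s - (- kap)\<bar> < r / C"
    using lim_delta[OF powr_quot_lim[of "- kap"], of "r / C"] r C_pos by auto
  obtain N where N: "\<And>n. n \<ge> N \<Longrightarrow> C * x (Suc n) powr a < \<delta>" using xs_small[OF dp] by auto
  have "\<bar>e n\<bar> \<le> r" if "n \<ge> N" "\<not> bad n" for n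
  proof -
    note gf = good_facts[OF that(2)]
    have "\<bar>((1 + th n) powr (- kap) - 1) / th n - (- kap)\<bar> < r / C"
      using dl[OF gf(1)] gf(2) N[OF that(1)] by simp
    hence "C * \<bar>((1 + th n) powr (- kap) - 1) / th n - (- kap)\<bar> \<le> r"
      using C_pos by (simp add: field_simps)
    thus ?thesis using gf(3) C_pos by (simp add: abs_mult)
  qed
  thus ?thesis by blast
qed

lemma G_d: "0 < r \<Longrightarrow> \<exists>N. \<forall>n\<ge>N. \<not> bad n \<longrightarrow> \<bar>d n\<bar> \<le> r"
proof -
  assume r: "0 < r"
  obtain \<delta> where dp: "\<delta> > 0" and dl: "\<And>s. 0 < s \<Longrightarrow> s < \<delta> \<Longrightarrow> \<bar>((1+s) powr (- a) - 1)/s - (- a)\<bar> < r / C"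
    using lim_delta[OF powr_quot_lim[of "- a"], of "r / C"] r C_pos by auto
  obtain N where N: "\<And>n. n \<ge> N \<Longrightarrow> C * x (Suc n) powr a < \<delta>" using xs_small[OF dp] by auto
  have "\<bar>d n\<bar> \<le> r" if "n \<ge> N" "\<not> bad n" for n
  proof -
    note gf = good_facts[OF that(2)]
    have "\<bar>((1 + th n) powr (- a) - 1) / th n - (- a)\<bar> < r / C"
      using dl[OF gf(1)] gf(2) N[OF that(1)] by simp
    hence "C * \<bar>((1 + th n) powr (- a) - 1) / th n - (- a)\<bar> \<le> r"
      using C_pos by (simp add: field_simps)
    thus ?thesis using gf(4) by simp
  qed
  thus ?thesis by blast
qed

lemma B_e: "\<exists>N0. \<forall>n\<ge>N0. bad n \<longrightarrow> \<bar>e n\<bar> \<le> 3 * C * (kap + 1) + kap * C"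
proof -
  obtain \<delta> where dp: "\<delta> > 0" and dl: "\<And>s. 0 < s \<Longrightarrow> s < \<delta> \<Longrightarrow> \<bar>((1+s) powr kap - 1)/s - kap\<bar> < 1"
    using lim_delta[OF powr_quot_lim[of kap], of 1] by auto
  obtain N where N: "\<And>n. n \<ge> N \<Longrightarrow> C * x (Suc n) powr a < min \<delta> c1"
    using xs_small[of "min \<delta> c1"] dp c1_pos by auto
  have "\<bar>e n\<bar> \<le> 3 * C * (kap + 1) + kap * C" if "n \<ge> N" "bad n" for n
  proof -
    define y where "y = x (Suc n)"
    define s where "s = C * y powr a"
    have y: "0 < y" "y < x n" using x_pos x_dec by (auto simp: y_def)
    have sp: "0 < s" using C_pos y by (simp add: s_def)
    have sd: "s < \<delta>" "s < c1" using N[OF that(1)] by (auto simp: s_def y_def)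
    have fl: "\<lfloor>tau (x n)\<rfloor> \<noteq> \<lfloor>tau y\<rfloor>" using that(2) by (simp add: bad_def tt_def y_def)
    have bi: "0 \<le> kk (tau y) - kk (tau (x n))" "kk (tau y) - kk (tau (x n)) \<le> 3 * y powr (- a) * ((1 + s) powr kap - 1)"
      using bad_incr[OF y x_up[of n, folded y_def, folded s_def] _ sd(2) fl] sp by auto
    have q: "((1+s) powr kap - 1)/s < kap + 1" using dl[OF sp sd(1)] by linarith
    have ys: "y powr (- a) * s = C" using y by (simp add: s_def powr_minus field_simps)
    have "C * (((1+s) powr kap - 1)/s) = (y powr (- a) * s) * (((1+s) powr kap - 1)/s)" by (simp add: ys)
    also have "\<dots> = y powr (- a) * ((1 + s) powr kap - 1)" using sp by simp
    finally have "y powr (- a) * ((1 + s) powr kap - 1) = C * (((1+s) powr kap - 1)/s)" by simp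
    also have "\<dots> \<le> C * (kap + 1)" using q C_pos by (intro mult_left_mono) auto
    finally have "kk (tau y) - kk (tau (x n)) \<le> 3 * C * (kap + 1)" using bi(2) by simp
    moreover have "0 \<le> kap * C" using kap_pos C_pos by simp
    ultimately show ?thesis using bi(1) unfolding e_def T_def tt_def y_def abs_le_iff by linarith
  qed
  thus ?thesis by blast
qed

lemma ln_over_n: "(K::real) > 0 \<Longrightarrow> b > 0 \<Longrightarrow> ((\<lambda>n::nat. ln (K + b * real n) / real n) \<longlonglongrightarrow> 0)"
  by real_asymp

lemma u_eq: "u n = c powr tt n" by (simp add: u_def tt_def c_powr_tau[OF x_pos])

lemma x0: "x 0 = 1/2" using orbit by (simp add: is_orbit_def)

lemma u0: "u 0 = 2 powr a"
  by (simp add: u_def x0 powr_minus_divide powr_divide)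

lemma u_le: "u n \<le> u 0 + a * C * real n"
proof (induction n)
  case 0 thus ?case by simp
next
  case (Suc n) thus ?case using du_bounds[of n] by (simp add: algebra_simps)
qed

lemma u_ge: "u 0 \<le> u n"
proof (induction n)
  case 0 thus ?case by simp
next
  case (Suc n) thus ?case using du_bounds[of n] by simp
qed

lemma cnt_le: "(\<Sum>j<n. if bad j then 1 else 0) \<le> real_of_int \<lfloor>tt n\<rfloor> - real_of_int \<lfloor>tt 0\<rfloor>"
proof -
  have "(\<Sum>j<n. if bad j then 1 else (0::real)) \<le> (\<Sum>j<n. real_of_int \<lfloor>tt (Suc j)\<rfloor> - real_of_int \<lfloor>tt j\<rfloor>)"
  proof (rule sum_mono)
    fix j
    have "\<lfloor>tt j\<rfloor> \<le> \<lfloor>tt (Suc j)\<rfloor>" using tt_mono[of j] by (intro floor_mono) simp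
    thus "(if bad j then 1 else 0) \<le> real_of_int \<lfloor>tt (Suc j)\<rfloor> - real_of_int \<lfloor>tt j\<rfloor>"
      by (auto simp: bad_def)
  qed
  also have "\<dots> = real_of_int \<lfloor>tt n\<rfloor> - real_of_int \<lfloor>tt 0\<rfloor>"
    by (rule sum_lessThan_telescope)
  finally show ?thesis .
qed

lemma cnt_lim: "(\<lambda>n. (\<Sum>j<n. if bad j then 1 else 0) / real n) \<longlonglongrightarrow> 0"
proof (rule tendsto_sandwich)
  show "eventually (\<lambda>n. 0 \<le> (\<Sum>j<n. if bad j then 1 else 0) / real n) sequentially"
    by (intro always_eventually allI divide_nonneg_nonneg sum_nonneg) auto
  have t0: "0 \<le> tt 0" using c1_pos by (simp add: tt_def tau_def x0 ln_div)
  have u0p: "0 < u 0" by (simp add: u0)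
  show "eventually (\<lambda>n. (\<Sum>j<n. if bad j then 1 else 0) / real n \<le>
          (1/(a*c1)) * (ln (u 0 + a * C * real n) / real n) + 1 / real n) sequentially"
  proof (intro always_eventually allI)
    fix n
    have "tt n = ln (u n) / (a * c1)" using c_gt1 c1_pos a_pos by (simp add: u_eq ln_powr ln_c)
    also have "\<dots> \<le> ln (u 0 + a * C * real n) / (a * c1)"
      using u_le[of n] u_ge[of n] u0p a_pos c1_pos by (intro divide_right_mono ln_mono) auto
    finally have "(\<Sum>j<n. if bad j then 1 else 0) \<le> ln (u 0 + a * C * real n) / (a * c1) + 1"
      using cnt_le[of n] t0 by linarith
    hence "(\<Sum>j<n. if bad j then 1 else 0) / real n \<le> (ln (u 0 + a * C * real n) / (a * c1) + 1) / real n"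
      by (intro divide_right_mono) auto
    thus "(\<Sum>j<n. if bad j then 1 else 0) / real n \<le>
          (1/(a*c1)) * (ln (u 0 + a * C * real n) / real n) + 1 / real n"
      by (simp add: add_divide_distrib)
  qed
  have "(\<lambda>n. ln (u 0 + a * C * real n) / real n) \<longlonglongrightarrow> 0"
    using ln_over_n[of "u 0" "a * C"] u0p a_pos C_pos by simp
  hence "(\<lambda>n. (1/(a*c1)) * (ln (u 0 + a * C * real n) / real n) + 1 / real n) \<longlonglongrightarrow> (1/(a*c1)) * 0 + 0"
    by (intro tendsto_intros lim_const_over_n)
  thus "(\<lambda>n. (1/(a*c1)) * (ln (u 0 + a * C * real n) / real n) + 1 / real n) \<longlonglongrightarrow> 0" by simp
qed (simp)

lemma E_lim: "(\<lambda>n. (\<Sum>j<n. e j) / real n) \<longlonglongrightarrow> 0"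
proof -
  obtain N0 where "\<forall>n\<ge>N0. bad n \<longrightarrow> \<bar>e n\<bar> \<le> 3 * C * (kap + 1) + kap * C" using B_e by blast
  thus ?thesis using G_e cnt_lim by (intro cesaro_bad[where Nb = N0]) auto
qed

lemma D_lim: "(\<lambda>n. (\<Sum>j<n. d j) / real n) \<longlonglongrightarrow> 0"
  using G_d cnt_lim d_bound by (intro cesaro_bad[where Nb = 0 and B = "a * C"]) auto

lemma T_lim: "(\<lambda>n. T n / real n) \<longlonglongrightarrow> kap * C"
proof -
  have Ts: "T n = T 0 + real n * (kap * C) + (\<Sum>j<n. e j)" for n
  proof -
    have "(\<Sum>j<n. e j) = (\<Sum>j<n. T (Suc j) - T j) - real n * (kap * C)"
      by (simp add: e_def sum_subtractf)
    thus ?thesis by (simp add: sum_lessThan_telescope)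
  qed
  have "(\<lambda>n. T 0 / real n + kap * C + (\<Sum>j<n. e j) / real n) \<longlonglongrightarrow> 0 + kap * C + 0"
    by (intro tendsto_intros lim_const_over_n E_lim)
  moreover have "eventually (\<lambda>n. T 0 / real n + kap * C + (\<Sum>j<n. e j) / real n = T n / real n) sequentially"
  proof (rule eventually_mono[OF eventually_gt_at_top[of 0]])
    fix n :: nat assume "0 < n"
    thus "T 0 / real n + kap * C + (\<Sum>j<n. e j) / real n = T n / real n"
      unfolding Ts[of n] by (simp add: field_simps)
  qed
  ultimately show ?thesis by (simp add: tendsto_cong)
qed

lemma M_sum: "(\<Sum>j = 1..n. M1 C c1 (x j)) = (u n - u 0 - (\<Sum>j<n. d j)) / a"
proof -
  have "(\<Sum>j<n. d j) = (\<Sum>j<n. u (Suc j) - u j) - a * (\<Sum>j<n. M1 C c1 (x (Suc j)))"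
    by (simp add: d_def sum_subtractf sum_distrib_left)
  hence "(\<Sum>j<n. d j) = u n - u 0 - a * (\<Sum>j = 1..n. M1 C c1 (x j))"
    by (simp add: sum_lessThan_telescope sum.atLeast1_atMost_eq)
  thus ?thesis using a_pos by (simp add: field_simps)
qed


lemma sigma_conv:
  assumes lim: "(\<lambda>k. kk (\<sigma> k)) \<longlonglongrightarrow> A" and A: "0 < A"
  shows "\<exists>\<sigma>s. \<sigma> \<longlonglongrightarrow> \<sigma>s"
proof -
  define S where "S = {t. kk t \<le> A}"
  have k0: "0 < kk 0" by (rule kk_pos)
  obtain m :: nat where m: "kk 0 / A < c ^ m" using real_arch_pow[OF c_gt1] by blast
  have "kk (- real m + real m) = c ^ m * kk (- real m)" by (rule kk_shift)
  hence "kk (- real m) = kk 0 / c ^ m" using c_gt1 by (simp add: field_simps)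
  also have "\<dots> \<le> A" using m A c_gt1 by (simp add: field_simps)
  finally have mS: "- real m \<in> S" by (simp add: S_def)
  obtain M :: nat where M: "A / kk 0 < c ^ M" using real_arch_pow[OF c_gt1] by blast
  have "kk (0 + real M) = c ^ M * kk 0" by (rule kk_shift)
  hence kM: "A < kk (real M)" using M k0 by (simp add: field_simps)
  have bdd: "\<And>t. t \<in> S \<Longrightarrow> t \<le> real M"
  proof -
    fix t assume "t \<in> S"
    hence "kk t \<le> A" by (simp add: S_def)
    thus "t \<le> real M" using kk_strict_mono[of "real M" t] kM by (meson not_le less_trans)
  qed
  have Sne: "S \<noteq> {}" using mS by blast
  have Sbdd: "bdd_above S" using bdd by (auto simp: bdd_above_def)
  define \<sigma>s where "\<sigma>s = Sup S"
  show ?thesis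
  proof (rule exI[of _ \<sigma>s], rule LIMSEQ_I)
    fix r :: real assume r: "0 < r"
    have hi: "A < kk (\<sigma>s + r)"
    proof (rule ccontr)
      assume "\<not> ?thesis"
      hence "\<sigma>s + r \<in> S" by (simp add: S_def)
      hence "\<sigma>s + r \<le> \<sigma>s" unfolding \<sigma>s_def using Sbdd by (rule cSup_upper)
      thus False using r by simp
    qed
    have lo: "kk (\<sigma>s - r) < A"
    proof -
      have "\<sigma>s - r < Sup S" using r by (simp add: \<sigma>s_def)
      then obtain t where t: "t \<in> S" "\<sigma>s - r < t" using less_cSupE[OF _ Sne] by blast
      have "kk (\<sigma>s - r) < kk t" using t(2) by (rule kk_strict_mono)
      thus ?thesis using t(1) by (simp add: S_def)
    qed
    define \<epsilon> where "\<epsilon> = min (A - kk (\<sigma>s - r)) (kk (\<sigma>s + r) - A)"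
    have ep: "0 < \<epsilon>" using hi lo by (simp add: \<epsilon>_def)
    obtain N where N: "\<And>n. n \<ge> N \<Longrightarrow> norm (kk (\<sigma> n) - A) < \<epsilon>" using LIMSEQ_D[OF lim ep] by blast
    have "norm (\<sigma> n - \<sigma>s) < r" if "n \<ge> N" for n
    proof -
      have "kk (\<sigma>s - r) < kk (\<sigma> n)" "kk (\<sigma> n) < kk (\<sigma>s + r)"
        using N[OF that] by (auto simp: \<epsilon>_def)
      hence "\<sigma>s - r < \<sigma> n" "\<sigma> n < \<sigma>s + r" using kk_mono by (meson not_le)+
      thus ?thesis by simp
    qed
    thus "\<exists>N. \<forall>n\<ge>N. norm (\<sigma> n - \<sigma>s) < r" by blast
  qed
qed

lemma main:
  "\<exists>\<zeta>::real. (\<lambda>k. real (nat \<lfloor>exp (a * c1) ^ Suc k\<rfloor>) / real (nat \<lfloor>exp (a * c1) ^ k\<rfloor>)) \<longlonglongrightarrow> exp (a * c1)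
      \<and> (\<lambda>k. M0 C c1 x (nat \<lfloor>exp (a * c1) ^ k\<rfloor>)) \<longlonglongrightarrow> \<zeta>"
proof -
  define w where "w k = nat \<lfloor>c ^ k\<rfloor>" for k
  have c1': "1 \<le> c" using c_gt1 by simp
  have ck1: "1 \<le> c ^ k" for k using c1' by (rule one_le_power)
  have wr: "real (w k) = real_of_int \<lfloor>c ^ k\<rfloor>" for k
    using ck1[of k] by (simp add: w_def)
  have wb: "c ^ k - 1 < real (w k)" "real (w k) \<le> c ^ k" for k
    by (simp_all add: wr)
  have w1: "1 \<le> real (w k)" for k using ck1[of k] by (simp add: wr)
  have wpos: "0 < real (w k)" for k using w1[of k] by simp
  have wc: "(\<lambda>k. real (w k) / c ^ k) \<longlonglongrightarrow> 1"
  proof (rule tendsto_sandwich)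
    show "eventually (\<lambda>k. 1 - (1 / c) ^ k \<le> real (w k) / c ^ k) sequentially"
    proof (intro always_eventually allI)
      fix k
      have "c ^ k - 1 \<le> real (w k)" using wb(1)[of k] by simp
      hence "(c ^ k - 1) / c ^ k \<le> real (w k) / c ^ k" using ck1[of k] by (intro divide_right_mono) auto
      moreover have "(c ^ k - 1) / c ^ k = 1 - (1 / c) ^ k" using ck1[of k] c_gt1 by (simp add: power_one_over diff_divide_distrib)
      ultimately show "1 - (1 / c) ^ k \<le> real (w k) / c ^ k" by simp
    qed
    show "eventually (\<lambda>k. real (w k) / c ^ k \<le> 1) sequentially"
    proof (intro always_eventually allI)
      fix k show "real (w k) / c ^ k \<le> 1" using wb(2)[of k] ck1[of k] by (simp add: divide_le_eq)
    qed
    have "(\<lambda>k. (1 / c) ^ k) \<longlonglongrightarrow> 0" by (rule LIMSEQ_power_zero) (use c_gt1 in simp)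
    hence "(\<lambda>k. 1 - (1 / c) ^ k) \<longlonglongrightarrow> 1 - 0" by (rule tendsto_diff[OF tendsto_const])
    thus "(\<lambda>k. 1 - (1 / c) ^ k) \<longlonglongrightarrow> 1" by simp
  qed simp
  have ratio: "(\<lambda>k. real (w (Suc k)) / real (w k)) \<longlonglongrightarrow> c"
  proof -
    have L: "(\<lambda>k. c * ((real (w (Suc k)) / c ^ Suc k) / (real (w k) / c ^ k))) \<longlonglongrightarrow> c * (1 / 1)"
      using wc LIMSEQ_Suc[OF wc] by (intro tendsto_intros) auto
    have eq: "(\<lambda>k. c * ((real (w (Suc k)) / c ^ Suc k) / (real (w k) / c ^ k))) = (\<lambda>k. real (w (Suc k)) / real (w k))"
    proof
      fix k show "c * ((real (w (Suc k)) / c ^ Suc k) / (real (w k) / c ^ k)) = real (w (Suc k)) / real (w k)"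
        using c_gt1 wpos[of k] by (simp add: field_simps)
    qed
    show ?thesis using L unfolding eq by simp
  qed
  have wlim: "filterlim w at_top sequentially"
    unfolding filterlim_at_top
  proof
    fix Z :: nat
    obtain k0 where k0: "real Z + 1 < c ^ k0" using real_arch_pow[OF c_gt1] by blast
    have "Z \<le> w k" if "k0 \<le> k" for k
    proof -
      have "c ^ k0 \<le> c ^ k" using that c1' by (simp add: power_increasing)
      hence "real Z < real (w k)" using wb(1)[of k] k0 by linarith
      thus ?thesis by simp
    qed
    thus "eventually (\<lambda>k. Z \<le> w k) sequentially" by (auto simp: eventually_sequentially)
  qed
  define \<sigma> where "\<sigma> k = tt (w k) - real k" for k
  have kks: "kk (\<sigma> k) = T (w k) / real (w k) * (real (w k) / c ^ k)" for k
  proof -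
    have "kk (\<sigma> k + real k) = c ^ k * kk (\<sigma> k)" by (rule kk_shift)
    hence "kk (\<sigma> k) = T (w k) / c ^ k" using c_gt1 by (simp add: \<sigma>_def T_def field_simps)
    thus ?thesis using wpos[of k] by simp
  qed
  have Tw: "(\<lambda>k. T (w k) / real (w k)) \<longlonglongrightarrow> kap * C"
    using filterlim_compose[OF T_lim wlim] .
  have "(\<lambda>k. kk (\<sigma> k)) \<longlonglongrightarrow> kap * C * 1"
    unfolding kks by (intro tendsto_intros Tw wc)
  hence "(\<lambda>k. kk (\<sigma> k)) \<longlonglongrightarrow> kap * C" by simp
  moreover have "0 < kap * C" using kap_pos C_pos by simp
  ultimately obtain \<sigma>s where sl: "\<sigma> \<longlonglongrightarrow> \<sigma>s" using sigma_conv by blast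
  have uw: "u (w k) / c ^ k = c powr \<sigma> k" for k
  proof -
    have "u (w k) = c powr (\<sigma> k + real k)" by (simp add: u_eq \<sigma>_def)
    also have "\<dots> = c powr \<sigma> k * c ^ k" using c_gt1 by (simp add: powr_add powr_realpow)
    finally show ?thesis using c_gt1 by simp
  qed
  have Dw: "(\<lambda>k. (\<Sum>j<w k. d j) / real (w k)) \<longlonglongrightarrow> 0"
    using filterlim_compose[OF D_lim wlim] .
  have u0w: "(\<lambda>k. u 0 / real (w k)) \<longlonglongrightarrow> 0"
    using filterlim_compose[OF lim_const_over_n[of "u 0"] wlim] .
  have cw: "(\<lambda>k. c ^ k / real (w k)) \<longlonglongrightarrow> 1"
  proof -
    have "(\<lambda>k. inverse (real (w k) / c ^ k)) \<longlonglongrightarrow> inverse 1" by (intro tendsto_intros wc) simp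
    thus ?thesis by simp
  qed
  have Meq: "M0 C c1 x (w k) = (1/a) * ((u (w k) / c ^ k) * (c ^ k / real (w k)) - u 0 / real (w k)
               - (\<Sum>j<w k. d j) / real (w k))" for k
    using wpos[of k] c_gt1 a_pos unfolding M0_def M_sum[of "w k"] by (simp add: field_simps)
  have "(\<lambda>k. M0 C c1 x (w k)) \<longlonglongrightarrow> (1/a) * (c powr \<sigma>s * 1 - 0 - 0)"
    unfolding Meq uw using c_gt1 by (intro tendsto_intros sl cw u0w Dw) auto
  thus ?thesis using ratio by (auto simp: w_def c_def)
qed

end

theorem proposition4p3:
  fixes \<alpha> C0 c1 :: real and x :: "nat \<Rightarrow> real"
  assumes "0 < \<alpha>" "\<alpha> < 1" "0 < c1"
    and "(fM1 \<alpha> C0 c1 \<longlongrightarrow> 1) (at_left (1/2))"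
    and "is_orbit \<alpha> C0 c1 x"
  defines "c \<equiv> exp (\<alpha> * c1)"
  defines "w \<equiv> (\<lambda>k::nat. nat \<lfloor>c ^ k\<rfloor>)"
  shows "\<exists>\<zeta>::real. (\<lambda>k. real (w (Suc k)) / real (w k)) \<longlonglongrightarrow> c
                 \<and> (\<lambda>k. M0 C0 c1 x (w k)) \<longlonglongrightarrow> \<zeta>"
proof -
  have C0p: "0 < C0"
  proof (rule ccontr)
    assume "\<not> 0 < C0"
    hence C0n: "C0 \<le> 0" by simp
    have ev: "eventually (\<lambda>y. y \<in> {0<..<1/2}) (at_left (1/2::real))"
      by (rule eventually_at_left_real) simp
    have "eventually (\<lambda>y. fM1 \<alpha> C0 c1 y \<le> 1/2) (at_left (1/2::real))"
      using ev
    proof (rule eventually_mono)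
      fix y :: real assume y: "y \<in> {0<..<1/2}"
      have "M1 C0 c1 y \<le> 0" using C0n by (simp add: M1_def mult_nonpos_nonneg)
      hence "M1 C0 c1 y * y powr \<alpha> \<le> 0" by (simp add: mult_nonpos_nonneg)
      hence h: "y * (1 + M1 C0 c1 y * y powr \<alpha>) \<le> y * 1" using y by (intro mult_left_mono) auto
      have "fM1 \<alpha> C0 c1 y = y * (1 + M1 C0 c1 y * y powr \<alpha>)" using y by (simp add: fM1_def)
      moreover have "y < 1/2" using y by simp
      ultimately show "fM1 \<alpha> C0 c1 y \<le> 1/2" using h by linarith
    qed
    hence "(1::real) \<le> 1/2" using assms(4) by (intro tendsto_upperbound) auto
    thus False by simp
  qed
  interpret O: orb \<alpha> C0 c1 x using assms(1,3,5) C0p by unfold_locales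
  show ?thesis using O.main unfolding c_def w_def .
qed

end
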